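(* Let $m\le t/100$. For any communication protocol $\Pi$ for the $m$-party $\textsf{MostlyEq}$ problem with failure probability $\Pr[\Pi(\boldsymbol P_U)=1]+\Pr[\Pi(\boldsymbol P_{Eq})=0]<0.1$, we have $\mathrm I\big(\Pi(\boldsymbol P_U);\boldsymbol P_U\big)=\Omega(1)$, i.e. the mutual information between the transcript and the input, when the input is drawn from $\boldsymbol P_U$, is at least an absolute constant.
   Context: In the $m$-party $\textsf{MostlyEq}$ problem, party $i$ holds $z_i\in[t]$, and $(z_1,\dots,z_m)$ is drawn from one of: $\boldsymbol P_U$, where the $z_i$ are i.i.d. uniform on $[t]$; or $\boldsymbol P_{Eq}$, where $\alpha$ is uniform in $[t]$ and independently each $z_i=\alpha$ with probability $1/2$ and otherwise is uniform on $[t]$. The parties communicate (possibly with private randomness) and the protocol outputs $1$ to indicate $\boldsymbol P_{Eq}$ and $0$ to indicate $\boldsymbol P_U$; $\Pi(\cdot)$ denotes the transcript on an input from the given distribution. *)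

theory Defs
  imports "HOL-Probability.Probability"
begin

(* Inputs: party i (0 <= i < m) holds z ! i \<in> {0..<t}  (the set [t], shifted to start at 0). *)

definition unif_inputs :: "nat \<Rightarrow> nat \<Rightarrow> nat list pmf" where
  "unif_inputs m t = map_pmf (\<lambda>f. map f [0..<m]) (Pi_pmf {..<m} 0 (\<lambda>_. pmf_of_set {..<t}))"

definition eq_inputs :: "nat \<Rightarrow> nat \<Rightarrow> nat list pmf" where
  "eq_inputs m t =
     do { \<alpha> \<leftarrow> pmf_of_set {..<t};
          map_pmf (\<lambda>f. map f [0..<m])
            (Pi_pmf {..<m} 0 (\<lambda>_. do { b \<leftarrow> bernoulli_pmf (1/2);
                                         if b then return_pmf \<alpha> else pmf_of_set {..<t} })) }"

(* A blackboard protocol with private randomness, in kernel form: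
   spk \<tau> = the party who speaks after transcript-prefix \<tau>;
   msg \<tau> x = distribution of the next message when the speaker's input is x;
   R = number of rounds; the output is a function of the full transcript. *)
fun transcript :: "(nat list \<Rightarrow> nat) \<Rightarrow> (nat list \<Rightarrow> nat \<Rightarrow> nat pmf) \<Rightarrow> nat list \<Rightarrow> nat \<Rightarrow> nat list pmf" where
  "transcript spk msg z 0 = return_pmf []"
| "transcript spk msg z (Suc k) =
     do { \<tau> \<leftarrow> transcript spk msg z k;
          a \<leftarrow> msg \<tau> (z ! spk \<tau>);
          return_pmf (\<tau> @ [a]) }"

definition input_transcript :: "nat list pmf \<Rightarrow> (nat list \<Rightarrow> nat) \<Rightarrow> (nat list \<Rightarrow> nat \<Rightarrow> nat pmf) \<Rightarrow> nat \<Rightarrow> (nat list \<times> nat list) pmf" where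
  "input_transcript D spk msg R = do { z \<leftarrow> D; \<tau> \<leftarrow> transcript spk msg z R; return_pmf (z, \<tau>) }"

definition prob_out1 :: "nat list pmf \<Rightarrow> (nat list \<Rightarrow> nat) \<Rightarrow> (nat list \<Rightarrow> nat \<Rightarrow> nat pmf) \<Rightarrow> nat \<Rightarrow> (nat list \<Rightarrow> bool) \<Rightarrow> real" where
  "prob_out1 D spk msg R out = measure_pmf.prob (input_transcript D spk msg R) {p. out (snd p)}"

definition info_cost :: "nat list pmf \<Rightarrow> (nat list \<Rightarrow> nat) \<Rightarrow> (nat list \<Rightarrow> nat \<Rightarrow> nat pmf) \<Rightarrow> nat \<Rightarrow> real" where
  "info_cost D spk msg R =
     prob_space.mutual_information (measure_pmf (input_transcript D spk msg R)) 2
       (count_space UNIV) (count_space UNIV) snd fst"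

end

theory Submission
  imports Defs
begin
definition Eu :: "nat \<Rightarrow> nat \<Rightarrow> ((nat \<Rightarrow> nat) \<Rightarrow> real) \<Rightarrow> real" where
  "Eu m t G = (\<Sum>g\<in>PiE {..<m} (\<lambda>_. {..<t}). G g) / real t ^ m"

lemma Eu_prod:
  "Eu m t (\<lambda>g. \<Prod>i<m. h i (g i)) = (\<Prod>i<m. (\<Sum>x<t. h i x) / real t)"
proof -
  have "(\<Sum>g\<in>PiE {..<m} (\<lambda>_. {..<t}). \<Prod>i<m. h i (g i)) = (\<Prod>i<m. \<Sum>x<t. h i x)"
    by (subst prod_sum_PiE) auto
  moreover have "(\<Prod>i<m. (\<Sum>x<t. h i x) / real t) = (\<Prod>i<m. \<Sum>x<t. h i x) / real t ^ m"
    by (simp add: prod_dividef)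
  ultimately show ?thesis unfolding Eu_def by simp
qed

lemma Eu_sum: "Eu m t (\<lambda>g. \<Sum>i\<in>I. G i g) = (\<Sum>i\<in>I. Eu m t (G i))"
  unfolding Eu_def by (subst sum.swap) (simp add: sum_divide_distrib)

lemma Eu_cmult: "Eu m t (\<lambda>g. c * G g) = c * Eu m t G"
  unfolding Eu_def by (simp add: sum_distrib_left)

lemma Eu_cong: "(\<And>g. g \<in> PiE {..<m} (\<lambda>_. {..<t}) \<Longrightarrow> G g = H g) \<Longrightarrow> Eu m t G = Eu m t H"
  unfolding Eu_def by (simp cong: sum.cong)

lemma prod_if_mult:
  fixes a :: "'a \<Rightarrow> real"
  assumes "finite A" "i \<in> A"
  shows "(\<Prod>j\<in>A. if j = i then a j * l else a j) = (\<Prod>j\<in>A. a j) * l"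
proof -
  have "(\<Prod>j\<in>A. if j = i then a j * l else a j) = (\<Prod>j\<in>A. a j * (if j = i then l else 1))"
    by (intro prod.cong) auto
  also have "\<dots> = (\<Prod>j\<in>A. a j) * (\<Prod>j\<in>A. if j = i then l else 1)"
    by (rule prod.distrib)
  also have "(\<Prod>j\<in>A. if j = i then l else 1) = l" using assms by simp
  finally show ?thesis .
qed


lemma ln_ge_1_minus_inv:
  fixes x :: real assumes "0 < x" shows "ln x \<ge> 1 - 1 / x"
proof -
  have "ln (1/x) \<le> 1/x - 1" using assms by (intro ln_le_minus_one) simp
  thus ?thesis using assms by (simp add: ln_div)
qed

lemma scalar_key:
  fixes r :: real assumes "0 \<le> r"
  shows "ln ((1 + r) / 2) \<ge> 3/2 * (r - 1) - r * ln r"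
proof -
  define s where "s = sqrt r"
  have s0: "0 \<le> s" and rs: "r = s^2" using assms by (auto simp: s_def)
  have a: "ln ((1 + r) / 2) \<ge> (r - 1) / (r + 1)"
  proof -
    have "ln ((1 + r) / 2) \<ge> 1 - 1 / ((1 + r) / 2)" using assms by (intro ln_ge_1_minus_inv) simp
    also have "1 - 1 / ((1 + r) / 2) = (r - 1) / (r + 1)" using assms by (simp add: field_simps)
    finally show ?thesis .
  qed
  have b: "r * ln r \<ge> 2 * r - 2 * s"
  proof (cases "s = 0")
    case True thus ?thesis using rs by simp
  next
    case False
    hence sp: "s > 0" using s0 by simp
    have "ln r = 2 * ln s" using rs sp by (simp add: ln_realpow)
    moreover have "ln s \<ge> 1 - 1 / s" using sp by (rule ln_ge_1_minus_inv)
    ultimately have "r * ln r \<ge> r * (2 * (1 - 1/s))" using assms by (intro mult_left_mono) auto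
    also have "r * (2 * (1 - 1/s)) = 2 * r - 2 * s" using sp rs by (simp add: field_simps power2_eq_square)
    finally show ?thesis .
  qed
  have c: "(r - 1) / (r + 1) \<ge> 3/2 * (r - 1) - 2 * r + 2 * s"
  proof -
    have "(r - 1) - (3/2 * (r - 1) - 2 * r + 2 * s) * (r + 1) = (s - 1)^4 / 2"
      unfolding rs by (simp add: field_simps power4_eq_xxxx power2_eq_square) 
    moreover have "(s - 1)^4 \<ge> 0" by simp
    ultimately have "(3/2 * (r - 1) - 2 * r + 2 * s) * (r + 1) \<le> r - 1" by linarith
    thus ?thesis using assms by (simp add: field_simps)
  qed
  show ?thesis using a b c by linarith
qed



lemma core_avg:
  fixes r :: "nat \<Rightarrow> nat \<Rightarrow> real"
  assumes t: "t > 0" and r0: "\<And>i x. i < m \<Longrightarrow> r i x \<ge> 0"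
    and r1: "\<And>i. i < m \<Longrightarrow> (\<Sum>x<t. r i x) = real t"
  shows "(\<Sum>\<alpha><t. \<Prod>i<m. (1 + r i \<alpha>) / 2) / real t
          \<ge> 1 - (\<Sum>i<m. (\<Sum>x<t. r i x * ln (r i x)) / real t)"
proof -
  have pt: "\<And>\<alpha>. (\<Prod>i<m. (1 + r i \<alpha>) / 2) \<ge>
      1 + (\<Sum>i<m. 3/2 * (r i \<alpha> - 1) - r i \<alpha> * ln (r i \<alpha>))"
  proof -
    fix \<alpha>
    define y where "y = (\<Prod>i<m. (1 + r i \<alpha>) / 2)"
    have ypos: "y > 0" unfolding y_def
    proof (intro prod_pos)
      fix i assume "i \<in> {..<m}" thus "0 < (1 + r i \<alpha>) / 2" using r0[of i \<alpha>] by simp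
    qed
    have "ln y = (\<Sum>i<m. ln ((1 + r i \<alpha>) / 2))"
      unfolding y_def
    proof (intro ln_prod)
      fix i assume "i \<in> {..<m}" thus "(1 + r i \<alpha>) / 2 \<noteq> 0" using r0[of i \<alpha>] by simp
    qed simp
    also have "\<dots> \<ge> (\<Sum>i<m. 3/2 * (r i \<alpha> - 1) - r i \<alpha> * ln (r i \<alpha>))"
      using r0 by (intro sum_mono scalar_key) auto
    finally have "ln y \<ge> (\<Sum>i<m. 3/2 * (r i \<alpha> - 1) - r i \<alpha> * ln (r i \<alpha>))" .
    moreover have "ln y \<le> y - 1" using ypos by (rule ln_le_minus_one)
    ultimately show "y \<ge> 1 + (\<Sum>i<m. 3/2 * (r i \<alpha> - 1) - r i \<alpha> * ln (r i \<alpha>))" by linarith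
  qed
  have "(\<Sum>\<alpha><t. \<Prod>i<m. (1 + r i \<alpha>) / 2) \<ge>
        (\<Sum>\<alpha><t. 1 + (\<Sum>i<m. 3/2 * (r i \<alpha> - 1) - r i \<alpha> * ln (r i \<alpha>)))"
    by (intro sum_mono pt)
  also have "(\<Sum>\<alpha><t. 1 + (\<Sum>i<m. 3/2 * (r i \<alpha> - 1) - r i \<alpha> * ln (r i \<alpha>)))
      = real t + (\<Sum>i<m. 3/2 * ((\<Sum>\<alpha><t. r i \<alpha>) - real t) - (\<Sum>\<alpha><t. r i \<alpha> * ln (r i \<alpha>)))"
    by (simp add: sum.distrib sum.swap[of _ "{..<t}"] sum_subtractf sum_distrib_left right_diff_distrib)
  also have "\<dots> = real t - (\<Sum>i<m. (\<Sum>\<alpha><t. r i \<alpha> * ln (r i \<alpha>)))"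
    using r1 by (simp add: sum_negf)
  finally have "real t * (1 - (\<Sum>i<m. (\<Sum>x<t. r i x * ln (r i x)) / real t)) \<le> (\<Sum>\<alpha><t. \<Prod>i<m. (1 + r i \<alpha>) / 2)"
    using t by (simp add: right_diff_distrib sum_divide_distrib[symmetric])
  thus ?thesis using t by (simp add: field_simps)
qed



lemma core:
  fixes q :: "nat \<Rightarrow> nat \<Rightarrow> real" and m t :: nat
  assumes t: "t > 0" and q0: "\<And>i x. q i x \<ge> 0"
  defines "Q \<equiv> \<lambda>i. (\<Sum>x<t. q i x) / real t"
  defines "P \<equiv> (\<Prod>i<m. Q i)"
  shows "(\<Sum>\<alpha><t. \<Prod>i<m. (q i \<alpha> + Q i) / 2) / real t \<ge>
         P - Eu m t (\<lambda>g. (\<Prod>i<m. q i (g i)) * ln ((\<Prod>i<m. q i (g i)) / P))"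
proof -
  have Q0: "\<And>i. Q i \<ge> 0" unfolding Q_def using q0 by (simp add: sum_nonneg)
  have P0: "P \<ge> 0" unfolding P_def using Q0 by (simp add: prod_nonneg)
  have PE0: "(\<Sum>\<alpha><t. \<Prod>i<m. (q i \<alpha> + Q i) / 2) / real t \<ge> 0"
    using q0 Q0 by (intro divide_nonneg_nonneg sum_nonneg prod_nonneg) (auto intro: add_nonneg_nonneg)
  show ?thesis
  proof (cases "P = 0")
    case True
    then obtain i where i: "i < m" "Q i = 0" unfolding P_def by auto
    hence qi: "\<And>x. x < t \<Longrightarrow> q i x = 0" unfolding Q_def using q0 t
      by (simp add: sum_nonneg_eq_0_iff)
    have "Eu m t (\<lambda>g. (\<Prod>i<m. q i (g i)) * ln ((\<Prod>i<m. q i (g i)) / P)) = Eu m t (\<lambda>g. 0)"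
    proof (rule Eu_cong)
      fix g assume "g \<in> PiE {..<m} (\<lambda>_. {..<t})"
      hence "g i < t" using i by auto
      hence "(\<Prod>i<m. q i (g i)) = 0" using i qi by (intro prod_zero) auto
      thus "(\<Prod>i<m. q i (g i)) * ln ((\<Prod>i<m. q i (g i)) / P) = 0" by simp
    qed
    also have "\<dots> = 0" unfolding Eu_def by simp
    finally show ?thesis using True PE0 by simp
  next
    case False
    hence Ppos: "P > 0" using P0 by simp
    have Qpos: "\<And>i. i < m \<Longrightarrow> Q i > 0"
    proof -
      fix i assume "i < m"
      hence "Q i \<noteq> 0" using False unfolding P_def by auto
      thus "Q i > 0" using Q0[of i] by simp
    qed
    define r where "r = (\<lambda>i x. q i x / Q i)"
    have r0: "\<And>i x. r i x \<ge> 0" unfolding r_def using q0 Q0 by simp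
    have qr: "\<And>i x. i < m \<Longrightarrow> q i x = Q i * r i x"
    proof -
      fix i x assume "i < m" hence "Q i > 0" by (rule Qpos)
      thus "q i x = Q i * r i x" unfolding r_def by simp
    qed
    have r1: "\<And>i. i < m \<Longrightarrow> (\<Sum>x<t. r i x) = real t"
    proof -
      fix i assume im: "i < m"
      have "(\<Sum>x<t. r i x) = (\<Sum>x<t. q i x) / Q i" unfolding r_def by (simp add: sum_divide_distrib)
      also have "\<dots> = real t" using Qpos[OF im] t unfolding Q_def by (simp add: field_simps)
      finally show "(\<Sum>x<t. r i x) = real t" .
    qed
    define R where "R = (\<lambda>g::nat\<Rightarrow>nat. \<Prod>i<m. r i (g i))"
    have R0: "\<And>g. R g \<ge> 0" unfolding R_def using r0 by (simp add: prod_nonneg)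
    have TR: "\<And>g. (\<Prod>i<m. q i (g i)) = P * R g"
    proof -
      fix g
      have "(\<Prod>i<m. q i (g i)) = (\<Prod>i<m. Q i * r i (g i))" using qr by (intro prod.cong) auto
      also have "\<dots> = P * R g" unfolding P_def R_def by (rule prod.distrib)
      finally show "(\<Prod>i<m. q i (g i)) = P * R g" .
    qed
    have PE_eq: "(\<Sum>\<alpha><t. \<Prod>i<m. (q i \<alpha> + Q i) / 2) / real t
        = P * ((\<Sum>\<alpha><t. \<Prod>i<m. (1 + r i \<alpha>) / 2) / real t)"
    proof -
      have "\<And>\<alpha>. (\<Prod>i<m. (q i \<alpha> + Q i) / 2) = P * (\<Prod>i<m. (1 + r i \<alpha>) / 2)"
      proof -
        fix \<alpha>
        have "(\<Prod>i<m. (q i \<alpha> + Q i) / 2) = (\<Prod>i<m. Q i * ((1 + r i \<alpha>) / 2))"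
          using qr by (intro prod.cong) (auto simp: field_simps)
        also have "\<dots> = P * (\<Prod>i<m. (1 + r i \<alpha>) / 2)" unfolding P_def by (rule prod.distrib)
        finally show "(\<Prod>i<m. (q i \<alpha> + Q i) / 2) = P * (\<Prod>i<m. (1 + r i \<alpha>) / 2)" .
      qed
      thus ?thesis by (simp add: sum_distrib_left)
    qed
    have RlnR: "\<And>g. R g * ln (R g) = (\<Sum>i<m. \<Prod>j<m. if j = i then r j (g j) * ln (r j (g j)) else r j (g j))"
    proof -
      fix g
      show "R g * ln (R g) = (\<Sum>i<m. \<Prod>j<m. if j = i then r j (g j) * ln (r j (g j)) else r j (g j))"
      proof (cases "R g = 0")
        case True
        then obtain j where j: "j < m" "r j (g j) = 0" unfolding R_def by auto
        have "\<And>i. i < m \<Longrightarrow> (\<Prod>j<m. if j = i then r j (g j) * ln (r j (g j)) else r j (g j)) = 0"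
          using j by (intro prod_zero) (auto intro!: bexI[of _ j])
        hence "(\<Sum>i<m. \<Prod>j<m. if j = i then r j (g j) * ln (r j (g j)) else r j (g j)) = 0"
          by (intro sum.neutral) blast
        thus ?thesis using True by simp
      next
        case False
        hence nz: "\<And>j. j < m \<Longrightarrow> r j (g j) \<noteq> 0" unfolding R_def by auto
        have "ln (R g) = (\<Sum>i<m. ln (r i (g i)))" unfolding R_def using nz by (intro ln_prod) auto
        hence "R g * ln (R g) = (\<Sum>i<m. R g * ln (r i (g i)))" by (simp add: sum_distrib_left)
        also have "\<dots> = (\<Sum>i<m. \<Prod>j<m. if j = i then r j (g j) * ln (r j (g j)) else r j (g j))"
        proof (intro sum.cong refl)
          fix i assume "i \<in> {..<m}"
          have "(\<Prod>j<m. if j = i then r j (g j) * ln (r j (g j)) else r j (g j))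
                = (\<Prod>j<m. if j = i then r j (g j) * ln (r i (g i)) else r j (g j))"
            by (intro prod.cong) auto
          also have "\<dots> = R g * ln (r i (g i))" unfolding R_def
            using \<open>i \<in> {..<m}\<close> by (intro prod_if_mult) auto
          finally show "R g * ln (r i (g i)) = (\<Prod>j<m. if j = i then r j (g j) * ln (r j (g j)) else r j (g j))" by simp
        qed
        finally show ?thesis .
      qed
    qed
    have EuR: "Eu m t (\<lambda>g. R g * ln (R g)) = (\<Sum>i<m. (\<Sum>x<t. r i x * ln (r i x)) / real t)"
    proof -
      have "Eu m t (\<lambda>g. R g * ln (R g)) = (\<Sum>i<m. Eu m t (\<lambda>g. \<Prod>j<m. if j = i then r j (g j) * ln (r j (g j)) else r j (g j)))"
        by (simp only: RlnR Eu_sum)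
      also have "\<dots> = (\<Sum>i<m. \<Prod>j<m. (\<Sum>x<t. if j = i then r j x * ln (r j x) else r j x) / real t)"
        by (intro sum.cong refl) (rule Eu_prod[of m t "\<lambda>j x. if j = i then r j x * ln (r j x) else r j x" for i])
      also have "\<dots> = (\<Sum>i<m. \<Prod>j<m. if j = i then (\<Sum>x<t. r i x * ln (r i x)) / real t else 1)"
        using r1 t by (intro sum.cong refl prod.cong) auto
      also have "\<dots> = (\<Sum>i<m. (\<Sum>x<t. r i x * ln (r i x)) / real t)" by simp
      finally show ?thesis .
    qed
    have D_eq: "Eu m t (\<lambda>g. (\<Prod>i<m. q i (g i)) * ln ((\<Prod>i<m. q i (g i)) / P))
               = P * (\<Sum>i<m. (\<Sum>x<t. r i x * ln (r i x)) / real t)"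
    proof -
      have "Eu m t (\<lambda>g. (\<Prod>i<m. q i (g i)) * ln ((\<Prod>i<m. q i (g i)) / P)) = Eu m t (\<lambda>g. P * (R g * ln (R g)))"
        using Ppos by (simp add: TR mult.assoc)
      also have "\<dots> = P * (\<Sum>i<m. (\<Sum>x<t. r i x * ln (r i x)) / real t)" by (simp add: Eu_cmult EuR)
      finally show ?thesis .
    qed
    have "(\<Sum>\<alpha><t. \<Prod>i<m. (1 + r i \<alpha>) / 2) / real t \<ge> 1 - (\<Sum>i<m. (\<Sum>x<t. r i x * ln (r i x)) / real t)"
      using core_avg[OF t, of m r] r0 r1 by auto
    hence "P * ((\<Sum>\<alpha><t. \<Prod>i<m. (1 + r i \<alpha>) / 2) / real t) \<ge> P * (1 - (\<Sum>i<m. (\<Sum>x<t. r i x * ln (r i x)) / real t))"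
      using P0 by (rule mult_left_mono)
    thus ?thesis unfolding PE_eq D_eq by (simp add: right_diff_distrib)
  qed
qed

lemma pmf_bind_Pair:
  "pmf (p \<bind> (\<lambda>x. map_pmf (Pair x) (K x))) (a, b) = pmf p a * pmf (K a) b"
proof -
  have "\<And>x. pmf (map_pmf (Pair x) (K x)) (a, b) = indicator {a} x * pmf (K a) b"
  proof -
    fix x show "pmf (map_pmf (Pair x) (K x)) (a, b) = indicator {a} x * pmf (K a) b"
    proof (cases "x = a")
      case True
      have "pmf (map_pmf (Pair a) (K a)) (Pair a b) = pmf (K a) b"
        by (rule pmf_map_inj') (auto simp: inj_def)
      thus ?thesis using True by simp
    next
      case False
      thus ?thesis by (subst pmf_map_outside) auto
    qed
  qed
  hence "pmf (p \<bind> (\<lambda>x. map_pmf (Pair x) (K x))) (a, b) = (\<integral>x. indicator {a} x * pmf (K a) b \<partial>p)"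
    by (simp add: pmf_bind)
  also have "\<dots> = measure p {a} * pmf (K a) b" by simp
  also have "\<dots> = pmf p a * pmf (K a) b" by (simp add: measure_pmf_single)
  finally show ?thesis .
qed

lemma distributed_pmf:
  fixes X :: "'a \<Rightarrow> 'c::countable"
  shows "distributed (measure_pmf J) (count_space UNIV) X (\<lambda>x. ennreal (pmf (map_pmf X J) x))"
  unfolding distributed_def
proof (intro conjI)
  show "distr (measure_pmf J) (count_space UNIV) X = density (count_space UNIV) (\<lambda>x. ennreal (pmf (map_pmf X J) x))"
    unfolding map_pmf_rep_eq[symmetric] by (rule measure_pmf_eq_density)
qed auto

lemma MI_infsetsum:
  fixes J :: "('a::countable \<times> 'b::countable) pmf"
  shows "prob_space.mutual_information (measure_pmf J) 2 (count_space UNIV) (count_space UNIV) snd fst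
     = infsetsum (\<lambda>x. pmf (map_pmf prod.swap J) x *
          log 2 (pmf (map_pmf prod.swap J) x / (pmf (map_pmf snd J) (fst x) * pmf (map_pmf fst J) (snd x)))) UNIV"
proof -
  have IS: "information_space (measure_pmf J) 2" by unfold_locales simp
  have cc: "count_space (UNIV::'b set) \<Otimes>\<^sub>M count_space (UNIV::'a set) = count_space UNIV"
    by (subst pair_measure_countable) auto
  have sw: "(\<lambda>x. (snd x, fst x)) = prod.swap" by auto
  have dj: "distributed (measure_pmf J) (count_space UNIV \<Otimes>\<^sub>M count_space UNIV) (\<lambda>x. (snd x, fst x))
      (\<lambda>x. ennreal (pmf (map_pmf prod.swap J) x))"
    unfolding cc sw by (rule distributed_pmf)
  have "prob_space.mutual_information (measure_pmf J) 2 (count_space UNIV) (count_space UNIV) snd fst =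
     integral\<^sup>L (count_space UNIV \<Otimes>\<^sub>M count_space UNIV) (\<lambda>x. pmf (map_pmf prod.swap J) x *
          log 2 (pmf (map_pmf prod.swap J) x / (pmf (map_pmf snd J) (fst x) * pmf (map_pmf fst J) (snd x))))"
    by (rule information_space.mutual_information_distr[OF IS sigma_finite_measure_count_space sigma_finite_measure_count_space distributed_pmf _ distributed_pmf _ dj]) auto
  thus ?thesis unfolding cc infsetsum_def .
qed


lemma ln_ge_1_minus_inv':
  fixes x :: real assumes "0 < x" shows "ln x \<ge> 1 - 1 / x"
proof -
  have "ln (1/x) \<le> 1/x - 1" using assms by (intro ln_le_minus_one) simp
  thus ?thesis using assms by (simp add: ln_div)
qed

lemma partA:
  fixes U Eq :: "'a::countable pmf" and K :: "'a \<Rightarrow> 'b::countable pmf" and Ob :: "'b set"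
  assumes fin: "finite (set_pmf U)"
  and key: "\<And>\<tau>. pmf (Eq \<bind> K) \<tau> \<ge> pmf (U \<bind> K) \<tau> -
       measure_pmf.expectation U (\<lambda>z. pmf (K z) \<tau> * ln (pmf (K z) \<tau> / pmf (U \<bind> K) \<tau>))"
  shows "measure_pmf.prob (U \<bind> (\<lambda>z. K z \<bind> (\<lambda>\<tau>. return_pmf (z, \<tau>)))) {p. snd p \<in> Ob}
       + (1 - measure_pmf.prob (Eq \<bind> (\<lambda>z. K z \<bind> (\<lambda>\<tau>. return_pmf (z, \<tau>)))) {p. snd p \<in> Ob})
     \<ge> 1 - ln 2 * prob_space.mutual_information (measure_pmf (U \<bind> (\<lambda>z. K z \<bind> (\<lambda>\<tau>. return_pmf (z, \<tau>)))))
            2 (count_space UNIV) (count_space UNIV) snd fst"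
proof -
  define J where "J = U \<bind> (\<lambda>z. K z \<bind> (\<lambda>\<tau>. return_pmf (z, \<tau>)))"
  define Ptr where "Ptr = U \<bind> K"
  have Jalt: "J = U \<bind> (\<lambda>z. map_pmf (Pair z) (K z))" by (simp add: J_def map_pmf_def)
  have jsnd: "\<And>D. map_pmf snd (D \<bind> (\<lambda>z. K z \<bind> (\<lambda>\<tau>. return_pmf (z, \<tau>)))) = D \<bind> K"
    by (simp add: map_bind_pmf map_return_pmf bind_return_pmf')
  have jsndJ: "map_pmf snd J = Ptr" unfolding J_def Ptr_def by (rule jsnd)
  have jfst: "map_pmf fst J = U"
    by (simp add: J_def map_bind_pmf map_return_pmf bind_return_pmf' bind_pmf_const)
  have pJs: "\<And>\<tau> z. pmf (map_pmf prod.swap J) (\<tau>, z) = pmf U z * pmf (K z) \<tau>"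
  proof -
    fix \<tau> z
    have "pmf (map_pmf prod.swap J) (prod.swap (z, \<tau>)) = pmf J (z, \<tau>)" by (rule pmf_map_inj') simp
    thus "pmf (map_pmf prod.swap J) (\<tau>, z) = pmf U z * pmf (K z) \<tau>" by (simp add: Jalt pmf_bind_Pair)
  qed
  have Pexp: "\<And>\<tau>. pmf Ptr \<tau> = (\<Sum>z\<in>set_pmf U. pmf U z * pmf (K z) \<tau>)"
    unfolding Ptr_def pmf_bind using fin by (subst integral_measure_pmf[of "set_pmf U"]) auto
  have Pge: "\<And>\<tau> z. z \<in> set_pmf U \<Longrightarrow> pmf U z * pmf (K z) \<tau> \<le> pmf Ptr \<tau>"
    unfolding Pexp using fin by (intro member_le_sum) auto
  define C where "C = (\<Sum>z\<in>set_pmf U. \<bar>ln (pmf U z)\<bar>)"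
  have Cge: "\<And>z. z \<in> set_pmf U \<Longrightarrow> \<bar>ln (pmf U z)\<bar> \<le> C"
    unfolding C_def using fin by (intro member_le_sum) auto
  have C0: "C \<ge> 0" unfolding C_def by (simp add: sum_nonneg)
  define g where "g = (\<lambda>(\<tau>, z). pmf U z * pmf (K z) \<tau> * ln (pmf (K z) \<tau> / pmf Ptr \<tau>))"
  have gbound: "\<And>x. norm (g x) \<le> norm (C * pmf (map_pmf prod.swap J) x + pmf (pair_pmf Ptr U) x)"
  proof -
    fix x :: "'b \<times> 'a"
    obtain \<tau> z where x: "x = (\<tau>, z)" by fastforce
    define u where "u = pmf U z"
    define k where "k = pmf (K z) \<tau>"
    define P where "P = pmf Ptr \<tau>"
    have rhs: "C * pmf (map_pmf prod.swap J) x + pmf (pair_pmf Ptr U) x = C * (u * k) + u * P"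
      by (simp add: x pJs pmf_pair u_def k_def P_def)
    have gx: "g x = u * k * ln (k / P)" by (simp add: x g_def u_def k_def P_def)
    have u0: "u \<ge> 0" "k \<ge> 0" "P \<ge> 0" by (auto simp: u_def k_def P_def)
    have "\<bar>u * k * ln (k / P)\<bar> \<le> C * (u * k) + u * P"
    proof (cases "u = 0 \<or> k = 0")
      case True thus ?thesis using u0 C0 by auto
    next
      case False
      hence up: "u > 0" and kp: "k > 0" using u0 by auto
      hence zU: "z \<in> set_pmf U" by (simp add: u_def set_pmf_eq)
      have uk: "u * k \<le> P" using Pge[OF zU] by (simp add: u_def k_def P_def)
      hence Pp: "P > 0" using up kp by (smt (verit) mult_pos_pos)
      define y where "y = k / P"
      have yp: "y > 0" using kp Pp by (simp add: y_def)
      have "\<bar>ln y\<bar> * (u * k) \<le> C * (u * k) + u * P"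
      proof (cases "y \<ge> 1")
        case True
        have "y \<le> 1 / u" using uk up Pp unfolding y_def by (simp add: field_simps)
        hence "ln y \<le> ln (1 / u)" using yp by (intro ln_mono) auto
        also have "ln (1 / u) = - ln u" using up by (simp add: ln_div)
        also have "\<dots> \<le> C" using Cge[OF zU] unfolding u_def by linarith
        finally have "\<bar>ln y\<bar> \<le> C" using True by simp
        hence "\<bar>ln y\<bar> * (u * k) \<le> C * (u * k)" using up kp by (intro mult_right_mono) auto
        thus ?thesis using up Pp by (smt (verit) mult_nonneg_nonneg)
      next
        case False
        have "ln (1 / y) \<le> 1 / y - 1" using yp by (intro ln_le_minus_one) simp
        hence "\<bar>ln y\<bar> \<le> 1 / y" using False yp by (simp add: ln_div)
        hence "\<bar>ln y\<bar> * (u * k) \<le> 1 / y * (u * k)" using up kp by (intro mult_right_mono) auto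
        also have "1 / y * (u * k) = u * P" using kp Pp by (simp add: y_def field_simps)
        finally show ?thesis using C0 up kp by (smt (verit) mult_nonneg_nonneg)
      qed
      thus ?thesis using up kp unfolding y_def by (simp add: abs_mult mult.commute)
    qed
    thus "norm (g x) \<le> norm (C * pmf (map_pmf prod.swap J) x + pmf (pair_pmf Ptr U) x)"
      unfolding rhs gx using u0 C0 by simp
  qed
  have gsum: "Infinite_Set_Sum.abs_summable_on g UNIV"
    by (rule abs_summable_on_comparison_test[OF _ gbound]) (intro abs_summable_on_add abs_summable_on_cmult_right pmf_abs_summable)
  have MI: "prob_space.mutual_information (measure_pmf J) 2 (count_space UNIV) (count_space UNIV) snd fst
            = infsetsum g UNIV / ln 2"
  proof -
    have "\<And>x. pmf (map_pmf prod.swap J) x *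
          log 2 (pmf (map_pmf prod.swap J) x / (pmf (map_pmf snd J) (fst x) * pmf (map_pmf fst J) (snd x)))
          = g x / ln 2"
    proof -
      fix x :: "'b \<times> 'a"
      obtain \<tau> z where x: "x = (\<tau>, z)" by fastforce
      show "pmf (map_pmf prod.swap J) x *
          log 2 (pmf (map_pmf prod.swap J) x / (pmf (map_pmf snd J) (fst x) * pmf (map_pmf fst J) (snd x)))
          = g x / ln 2"
      proof (cases "pmf U z = 0")
        case True thus ?thesis by (simp add: x pJs g_def)
      next
        case False
        have "pmf U z * pmf (K z) \<tau> / (pmf Ptr \<tau> * pmf U z) = pmf (K z) \<tau> / pmf Ptr \<tau>"
          using False by simp
        thus ?thesis using False
          by (simp add: x pJs g_def jfst jsndJ log_def)
      qed
    qed
    hence "prob_space.mutual_information (measure_pmf J) 2 (count_space UNIV) (count_space UNIV) snd fst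
          = infsetsum (\<lambda>x. g x / ln 2) UNIV"
      by (simp only: MI_infsetsum)
    also have "\<dots> = infsetsum g UNIV / ln 2" by (rule infsetsum_cdiv) (rule gsum)
    finally show ?thesis .
  qed
  define d where "d = (\<lambda>\<tau>. \<Sum>z\<in>set_pmf U. g (\<tau>, z))"
  have gd: "infsetsum g UNIV = infsetsum d UNIV"
  proof -
    have "infsetsum g (UNIV \<times> UNIV) = infsetsum (\<lambda>\<tau>. infsetsum (\<lambda>z. g (\<tau>, z)) UNIV) UNIV"
      by (rule infsetsum_Times) (auto simp: gsum)
    moreover have "\<And>\<tau>. infsetsum (\<lambda>z. g (\<tau>, z)) UNIV = d \<tau>"
    proof -
      fix \<tau>
      have "infsetsum (\<lambda>z. g (\<tau>, z)) UNIV = infsetsum (\<lambda>z. g (\<tau>, z)) (set_pmf U)"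
        by (rule infsetsum_cong_neutral) (auto simp: g_def set_pmf_eq)
      thus "infsetsum (\<lambda>z. g (\<tau>, z)) UNIV = d \<tau>" using fin by (simp add: d_def)
    qed
    ultimately show ?thesis by simp
  qed
  have dexp: "\<And>\<tau>. measure_pmf.expectation U (\<lambda>z. pmf (K z) \<tau> * ln (pmf (K z) \<tau> / pmf (U \<bind> K) \<tau>)) = d \<tau>"
    unfolding d_def g_def Ptr_def[symmetric] using fin
    by (subst integral_measure_pmf[of "set_pmf U"]) (auto simp: mult.assoc)
  have d0: "\<And>\<tau>. d \<tau> \<ge> 0"
  proof -
    fix \<tau>
    have "d \<tau> \<ge> (\<Sum>z\<in>set_pmf U. pmf U z * pmf (K z) \<tau> - pmf U z * pmf Ptr \<tau>)"
      unfolding d_def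
    proof (intro sum_mono)
      fix z assume zU: "z \<in> set_pmf U"
      define u where "u = pmf U z"
      define k where "k = pmf (K z) \<tau>"
      define P where "P = pmf Ptr \<tau>"
      have up: "u > 0" using zU by (simp add: u_def pmf_positive)
      have uk: "u * k \<le> P" using Pge[OF zU] by (simp add: u_def k_def P_def)
      have "u * k * ln (k / P) \<ge> u * k - u * P"
      proof (cases "k = 0")
        case True thus ?thesis using up by (simp add: P_def)
      next
        case False
        hence kp: "k > 0" by (simp add: k_def order_less_le)
        hence Pp: "P > 0" using uk up by (smt (verit) mult_pos_pos)
        have "ln (k / P) \<ge> 1 - 1 / (k / P)" using kp Pp by (intro ln_ge_1_minus_inv') simp
        hence "u * k * ln (k / P) \<ge> u * k * (1 - 1 / (k / P))" using up kp by (intro mult_left_mono) auto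
        also have "u * k * (1 - 1 / (k / P)) = u * k - u * P" using kp Pp by (simp add: field_simps)
        finally show ?thesis .
      qed
      thus "pmf U z * pmf (K z) \<tau> - pmf U z * pmf Ptr \<tau> \<le> g (\<tau>, z)"
        by (simp add: g_def u_def k_def P_def)
    qed
    also have "(\<Sum>z\<in>set_pmf U. pmf U z * pmf (K z) \<tau> - pmf U z * pmf Ptr \<tau>) = pmf Ptr \<tau> - pmf Ptr \<tau> * (\<Sum>z\<in>set_pmf U. pmf U z)"
      by (simp add: sum_subtractf Pexp[symmetric] sum_distrib_left mult.commute)
    also have "(\<Sum>z\<in>set_pmf U. pmf U z) = 1" using fin by (rule sum_pmf_eq_1) simp
    finally show "d \<tau> \<ge> 0" by simp
  qed
  have dbound: "\<And>\<tau>. norm (d \<tau>) \<le> norm ((C + 1) * pmf Ptr \<tau>)"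
  proof -
    fix \<tau>
    have "norm (d \<tau>) \<le> (\<Sum>z\<in>set_pmf U. norm (g (\<tau>, z)))" unfolding d_def by (rule norm_sum)
    also have "\<dots> \<le> (\<Sum>z\<in>set_pmf U. C * (pmf U z * pmf (K z) \<tau>) + pmf U z * pmf Ptr \<tau>)"
    proof (intro sum_mono)
      fix z
      have "norm (g (\<tau>, z)) \<le> norm (C * pmf (map_pmf prod.swap J) (\<tau>, z) + pmf (pair_pmf Ptr U) (\<tau>, z))"
        by (rule gbound)
      thus "norm (g (\<tau>, z)) \<le> C * (pmf U z * pmf (K z) \<tau>) + pmf U z * pmf Ptr \<tau>"
        using C0 by (simp add: pJs pmf_pair mult.commute)
    qed
    also have "\<dots> = C * (\<Sum>z\<in>set_pmf U. pmf U z * pmf (K z) \<tau>) + (\<Sum>z\<in>set_pmf U. pmf U z) * pmf Ptr \<tau>"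
      by (simp add: sum.distrib sum_distrib_left sum_distrib_right)
    also have "\<dots> = C * pmf Ptr \<tau> + pmf Ptr \<tau> * (\<Sum>z\<in>set_pmf U. pmf U z)"
      by (simp add: Pexp[symmetric] mult.commute)
    also have "(\<Sum>z\<in>set_pmf U. pmf U z) = 1" using fin by (rule sum_pmf_eq_1) simp
    finally show "norm (d \<tau>) \<le> norm ((C + 1) * pmf Ptr \<tau>)" using C0 by (simp add: algebra_simps)
  qed
  have dsum: "Infinite_Set_Sum.abs_summable_on d UNIV"
    by (rule abs_summable_on_comparison_test[OF _ dbound]) (intro abs_summable_on_cmult_right pmf_abs_summable)
  define PE where "PE = Eq \<bind> K"
  define h where "h = (\<lambda>\<tau>. pmf Ptr \<tau> - d \<tau>)"
  have hsum: "\<And>A. Infinite_Set_Sum.abs_summable_on h A"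
    unfolding h_def by (rule abs_summable_on_subset[OF _ subset_UNIV]) (intro abs_summable_on_diff pmf_abs_summable dsum)
  have key': "\<And>\<tau>. h \<tau> \<le> pmf PE \<tau>" using key unfolding h_def PE_def dexp Ptr_def by simp
  have hP: "\<And>\<tau>. h \<tau> \<le> pmf Ptr \<tau>" unfolding h_def using d0 by simp
  have m1: "measure_pmf.prob J {p. snd p \<in> Ob} = infsetsum (pmf Ptr) Ob"
  proof -
    have "measure_pmf.prob J {p. snd p \<in> Ob} = measure_pmf.prob (map_pmf snd J) Ob"
      by (simp add: vimage_def)
    thus ?thesis by (simp add: jsndJ measure_pmf_conv_infsetsum)
  qed
  have m2: "measure_pmf.prob (Eq \<bind> (\<lambda>z. K z \<bind> (\<lambda>\<tau>. return_pmf (z, \<tau>)))) {p. snd p \<in> Ob}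
      = infsetsum (pmf PE) Ob"
  proof -
    have "measure_pmf.prob (Eq \<bind> (\<lambda>z. K z \<bind> (\<lambda>\<tau>. return_pmf (z, \<tau>)))) {p. snd p \<in> Ob}
      = measure_pmf.prob (map_pmf snd (Eq \<bind> (\<lambda>z. K z \<bind> (\<lambda>\<tau>. return_pmf (z, \<tau>))))) Ob"
      by (simp add: vimage_def)
    thus ?thesis by (simp only: jsnd PE_def measure_pmf_conv_infsetsum)
  qed
  have PE1: "infsetsum (pmf PE) Ob + infsetsum (pmf PE) (-Ob) = 1"
  proof -
    have "infsetsum (pmf PE) Ob + infsetsum (pmf PE) (-Ob) = infsetsum (pmf PE) (Ob \<union> -Ob)"
      by (rule infsetsum_Un_disjoint[symmetric]) auto
    also have "\<dots> = 1" by (rule infsetsum_pmf_eq_1) simp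
    finally show ?thesis .
  qed
  have "infsetsum (pmf Ptr) Ob + infsetsum (pmf PE) (-Ob) \<ge> infsetsum h Ob + infsetsum h (-Ob)"
    by (intro add_mono infsetsum_mono hsum hP key' pmf_abs_summable)
  also have "infsetsum h Ob + infsetsum h (-Ob) = infsetsum h (Ob \<union> -Ob)"
    by (rule infsetsum_Un_disjoint[symmetric]) (auto intro: hsum)
  also have "\<dots> = infsetsum (pmf Ptr) UNIV - infsetsum d UNIV"
    unfolding h_def by (simp, rule infsetsum_diff[OF pmf_abs_summable dsum])
  also have "infsetsum (pmf Ptr) UNIV = 1" by (rule infsetsum_pmf_eq_1) simp
  also have "infsetsum d UNIV = ln 2 * prob_space.mutual_information (measure_pmf J) 2 (count_space UNIV) (count_space UNIV) snd fst"
    unfolding MI gd[symmetric] by simp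
  finally show ?thesis using m1 m2 PE1 unfolding J_def by linarith
qed

lemma transcript_Suc_alt:
  "transcript spk msg z (Suc n) =
     map_pmf (\<lambda>(\<sigma>, a). \<sigma> @ [a]) (transcript spk msg z n \<bind> (\<lambda>\<sigma>. map_pmf (Pair \<sigma>) (msg \<sigma> (z ! spk \<sigma>))))"
  by (simp add: map_pmf_def bind_assoc_pmf bind_return_pmf)

lemma pmf_transcript:
  "pmf (transcript spk msg z n) \<tau> =
     (if length \<tau> = n then \<Prod>k<n. pmf (msg (take k \<tau>) (z ! spk (take k \<tau>))) (\<tau> ! k) else 0)"
proof (induction n arbitrary: \<tau>)
  case 0
  thus ?case by (cases \<tau>) auto
next
  case (Suc n)
  show ?case
  proof (cases \<tau> rule: rev_exhaust)
    case Nil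
    have "pmf (transcript spk msg z (Suc n)) [] = 0"
      unfolding transcript_Suc_alt by (rule pmf_map_outside) auto
    thus ?thesis using Nil by simp
  next
    case (snoc \<sigma> a)
    have inj: "inj (\<lambda>(\<sigma>::nat list, a::nat). \<sigma> @ [a])" by (auto simp: inj_def)
    have "pmf (transcript spk msg z (Suc n)) \<tau> =
        pmf (transcript spk msg z n) \<sigma> * pmf (msg \<sigma> (z ! spk \<sigma>)) a"
      unfolding transcript_Suc_alt snoc
      using pmf_map_inj'[OF inj, of _ "(\<sigma>, a)"] by (simp add: pmf_bind_Pair)
    also have "\<dots> = (if length \<tau> = Suc n then \<Prod>k<Suc n. pmf (msg (take k \<tau>) (z ! spk (take k \<tau>))) (\<tau> ! k) else 0)"
    proof (cases "length \<sigma> = n")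
      case True
      have "(\<Prod>k<Suc n. pmf (msg (take k \<tau>) (z ! spk (take k \<tau>))) (\<tau> ! k))
          = (\<Prod>k<n. pmf (msg (take k \<sigma>) (z ! spk (take k \<sigma>))) (\<sigma> ! k)) * pmf (msg \<sigma> (z ! spk \<sigma>)) a"
        unfolding prod.lessThan_Suc snoc using True
        by (intro arg_cong2[where f = "(*)"] prod.cong) (auto simp: nth_append)
      thus ?thesis using True Suc.IH[of \<sigma>] snoc by simp
    next
      case False
      thus ?thesis using Suc.IH[of \<sigma>] snoc by simp
    qed
    finally show ?thesis .
  qed
qed

definition qq :: "(nat list \<Rightarrow> nat) \<Rightarrow> (nat list \<Rightarrow> nat \<Rightarrow> nat pmf) \<Rightarrow> nat \<Rightarrow> nat list \<Rightarrow> nat \<Rightarrow> nat \<Rightarrow> real" where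
  "qq spk msg R \<tau> i x = (\<Prod>k\<in>{k\<in>{..<R}. spk (take k \<tau>) = i}. pmf (msg (take k \<tau>) x) (\<tau> ! k))"

lemma qq_nonneg: "qq spk msg R \<tau> i x \<ge> 0"
  unfolding qq_def by (simp add: prod_nonneg)

lemma pmf_transcript_qq:
  assumes "\<And>\<sigma>. spk \<sigma> < m" "length \<tau> = R"
  shows "pmf (transcript spk msg z R) \<tau> = (\<Prod>i<m. qq spk msg R \<tau> i (z ! i))"
proof -
  have "(\<Prod>i<m. qq spk msg R \<tau> i (z ! i)) =
        (\<Prod>i<m. \<Prod>k\<in>{k\<in>{..<R}. spk (take k \<tau>) = i}. pmf (msg (take k \<tau>) (z ! spk (take k \<tau>))) (\<tau> ! k))"
    unfolding qq_def by (intro prod.cong refl) auto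
  also have "\<dots> = (\<Prod>k<R. pmf (msg (take k \<tau>) (z ! spk (take k \<tau>))) (\<tau> ! k))"
    by (rule prod.group) (use assms in auto)
  finally show ?thesis using assms by (simp add: pmf_transcript)
qed

lemma E_PiU:
  assumes t: "t > 0" and inv: "\<And>f g. (\<And>i. i < m \<Longrightarrow> f i = g i) \<Longrightarrow> G f = G g"
  shows "measure_pmf.expectation (Pi_pmf {..<m} (0::nat) (\<lambda>_. pmf_of_set {..<t})) G = Eu m t G"
proof -
  define S where "S = PiE_dflt {..<m} (0::nat) (\<lambda>_. {..<t})"
  have Pi: "Pi_pmf {..<m} (0::nat) (\<lambda>_. pmf_of_set {..<t}) = pmf_of_set S"
    unfolding S_def by (rule Pi_pmf_of_set) (use t in auto)
  have fin: "finite S" unfolding S_def by (intro finite_PiE_dflt) auto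
  have "{..<t} \<noteq> {}" using t by auto
  hence ne: "S \<noteq> {}" unfolding S_def by simp
  have card: "card S = t ^ m" unfolding S_def by (subst card_PiE_dflt) auto
  have bij: "bij_betw (\<lambda>f. restrict f {..<m}) S (PiE {..<m} (\<lambda>_. {..<t}))"
    unfolding bij_betw_def
  proof
    show "inj_on (\<lambda>f. restrict f {..<m}) S"
    proof (rule inj_onI)
      fix f g assume f: "f \<in> S" and g: "g \<in> S" and eq: "restrict f {..<m} = restrict g {..<m}"
      show "f = g"
      proof
        fix x show "f x = g x"
        proof (cases "x < m")
          case True thus ?thesis using fun_cong[OF eq, of x] by simp
        next
          case False thus ?thesis using f g unfolding S_def PiE_dflt_def by simp
        qed
      qed
    qed
    show "(\<lambda>f. restrict f {..<m}) ` S = PiE {..<m} (\<lambda>_. {..<t})"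
      unfolding S_def by (rule restrict_PiE_dflt)
  qed
  have "sum G S = sum (\<lambda>f. G (restrict f {..<m})) S"
  proof (rule sum.cong[OF refl])
    fix f show "G f = G (restrict f {..<m})" by (rule inv) simp
  qed
  also have "\<dots> = sum G (PiE {..<m} (\<lambda>_. {..<t}))" by (rule sum.reindex_bij_betw[OF bij])
  finally have "sum G S = sum G (PiE {..<m} (\<lambda>_. {..<t}))" .
  thus ?thesis unfolding Pi integral_pmf_of_set[OF ne fin] Eu_def card by simp
qed

definition mixp :: "nat \<Rightarrow> nat \<Rightarrow> nat pmf" where
  "mixp t \<alpha> = bernoulli_pmf (1/2) \<bind> (\<lambda>b. if b then return_pmf \<alpha> else pmf_of_set {..<t})"

lemma fin_mix: "t > 0 \<Longrightarrow> finite (set_pmf (mixp t \<alpha>))"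
  unfolding mixp_def by (auto simp: lessThan_empty_iff)

lemma E_mix:
  fixes f :: "nat \<Rightarrow> real"
  assumes t: "t > 0"
  shows "measure_pmf.expectation (mixp t \<alpha>) f = (f \<alpha> + (\<Sum>x<t. f x) / real t) / 2"
proof -
  have ne: "{..<t} \<noteq> {}" using t by auto
  have "measure_pmf.expectation (mixp t \<alpha>) f =
     (\<Sum>b\<in>UNIV. pmf (bernoulli_pmf (1/2)) b *\<^sub>R measure_pmf.expectation (if b then return_pmf \<alpha> else pmf_of_set {..<t}) f)"
    unfolding mixp_def by (rule pmf_expectation_bind) (use ne in auto)
  also have "\<dots> = (f \<alpha> + (\<Sum>x<t. f x) / real t) / 2"
    using ne by (simp add: UNIV_bool integral_pmf_of_set field_simps)
  finally show ?thesis .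
qed

lemma eq_alt: "eq_inputs m t = pmf_of_set {..<t} \<bind> (\<lambda>\<alpha>. map_pmf (\<lambda>f. map f [0..<m]) (Pi_pmf {..<m} 0 (\<lambda>_. mixp t \<alpha>)))"
  unfolding eq_inputs_def mixp_def by simp

lemma nth_lst: "i < m \<Longrightarrow> map f [0..<m] ! i = f i" by simp


lemma keyB:
  fixes spk :: "nat list \<Rightarrow> nat" and msg :: "nat list \<Rightarrow> nat \<Rightarrow> nat pmf" and R m t :: nat and \<tau> :: "nat list"
  assumes t: "t > 0" and spk: "\<And>\<sigma>. spk \<sigma> < m"
  defines "K \<equiv> (\<lambda>z. transcript spk msg z R)"
  shows "pmf (eq_inputs m t \<bind> K) \<tau> \<ge> pmf (unif_inputs m t \<bind> K) \<tau> -
       measure_pmf.expectation (unif_inputs m t) (\<lambda>z. pmf (K z) \<tau> * ln (pmf (K z) \<tau> / pmf (unif_inputs m t \<bind> K) \<tau>))"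
proof (cases "length \<tau> = R")
  case False
  hence "\<And>z. pmf (K z) \<tau> = 0" unfolding K_def by (simp add: pmf_transcript)
  thus ?thesis by (simp add: pmf_bind)
next
  case True
  define q where "q = qq spk msg R \<tau>"
  define lst where "lst = (\<lambda>f::nat\<Rightarrow>nat. map f [0..<m])"
  define Q where "Q = (\<lambda>i. (\<Sum>x<t. q i x) / real t)"
  define P where "P = (\<Prod>i<m. Q i)"
  have q0: "\<And>i x. q i x \<ge> 0" unfolding q_def by (rule qq_nonneg)
  have Kl: "\<And>f. pmf (K (lst f)) \<tau> = (\<Prod>i<m. q i (f i))"
    unfolding K_def q_def lst_def by (subst pmf_transcript_qq[OF spk True]) simp
  have inv: "\<And>f g. (\<And>i. i < m \<Longrightarrow> f i = g i) \<Longrightarrow> lst f = lst g"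
    unfolding lst_def by simp
  have U: "unif_inputs m t = map_pmf lst (Pi_pmf {..<m} 0 (\<lambda>_. pmf_of_set {..<t}))"
    unfolding unif_inputs_def lst_def ..
  have PU: "pmf (unif_inputs m t \<bind> K) \<tau> = P"
  proof -
    have "pmf (unif_inputs m t \<bind> K) \<tau> = measure_pmf.expectation (Pi_pmf {..<m} 0 (\<lambda>_. pmf_of_set {..<t})) (\<lambda>f. pmf (K (lst f)) \<tau>)"
      unfolding pmf_bind U by simp
    also have "\<dots> = Eu m t (\<lambda>f. pmf (K (lst f)) \<tau>)"
      by (rule E_PiU[OF t]) (metis inv)
    also have "\<dots> = Eu m t (\<lambda>f. \<Prod>i<m. q i (f i))" by (simp add: Kl)
    also have "\<dots> = P" unfolding Eu_prod P_def Q_def ..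
    finally show ?thesis .
  qed
  have DU: "measure_pmf.expectation (unif_inputs m t) (\<lambda>z. pmf (K z) \<tau> * ln (pmf (K z) \<tau> / P))
      = Eu m t (\<lambda>g. (\<Prod>i<m. q i (g i)) * ln ((\<Prod>i<m. q i (g i)) / P))"
  proof -
    have "measure_pmf.expectation (unif_inputs m t) (\<lambda>z. pmf (K z) \<tau> * ln (pmf (K z) \<tau> / P))
      = measure_pmf.expectation (Pi_pmf {..<m} 0 (\<lambda>_. pmf_of_set {..<t})) (\<lambda>f. pmf (K (lst f)) \<tau> * ln (pmf (K (lst f)) \<tau> / P))"
      unfolding U by simp
    also have "\<dots> = Eu m t (\<lambda>f. pmf (K (lst f)) \<tau> * ln (pmf (K (lst f)) \<tau> / P))"
      by (rule E_PiU[OF t]) (metis inv)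
    also have "\<dots> = Eu m t (\<lambda>g. (\<Prod>i<m. q i (g i)) * ln ((\<Prod>i<m. q i (g i)) / P))" by (simp add: Kl)
    finally show ?thesis .
  qed
  have PE: "pmf (eq_inputs m t \<bind> K) \<tau> = (\<Sum>\<alpha><t. \<Prod>i<m. (q i \<alpha> + Q i) / 2) / real t"
  proof -
    have ne: "{..<t} \<noteq> {}" using t by auto
    have inner: "\<And>\<alpha>. pmf (map_pmf lst (Pi_pmf {..<m} 0 (\<lambda>_. mixp t \<alpha>)) \<bind> K) \<tau> = (\<Prod>i<m. (q i \<alpha> + Q i) / 2)"
    proof -
      fix \<alpha>
      have "pmf (map_pmf lst (Pi_pmf {..<m} 0 (\<lambda>_. mixp t \<alpha>)) \<bind> K) \<tau>
         = measure_pmf.expectation (Pi_pmf {..<m} 0 (\<lambda>_. mixp t \<alpha>)) (\<lambda>f. \<Prod>i<m. q i (f i))"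
        unfolding pmf_bind by (simp add: Kl)
      also have "\<dots> = (\<Prod>i<m. measure_pmf.expectation (mixp t \<alpha>) (q i))"
        by (rule expectation_prod_Pi_pmf) (auto intro: integrable_measure_pmf_finite fin_mix[OF t] q0)
      also have "\<dots> = (\<Prod>i<m. (q i \<alpha> + Q i) / 2)" unfolding E_mix[OF t] Q_def ..
      finally show "pmf (map_pmf lst (Pi_pmf {..<m} 0 (\<lambda>_. mixp t \<alpha>)) \<bind> K) \<tau> = (\<Prod>i<m. (q i \<alpha> + Q i) / 2)" .
    qed
    have "pmf (eq_inputs m t \<bind> K) \<tau> = measure_pmf.expectation (pmf_of_set {..<t}) (\<lambda>\<alpha>. pmf (map_pmf lst (Pi_pmf {..<m} 0 (\<lambda>_. mixp t \<alpha>)) \<bind> K) \<tau>)"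
      unfolding eq_alt bind_assoc_pmf pmf_bind lst_def ..
    also have "\<dots> = (\<Sum>\<alpha><t. \<Prod>i<m. (q i \<alpha> + Q i) / 2) / real t"
      using ne by (simp add: integral_pmf_of_set inner)
    finally show ?thesis .
  qed
  have c: "(\<Sum>\<alpha><t. \<Prod>i<m. (q i \<alpha> + Q i) / 2) / real t \<ge>
         P - Eu m t (\<lambda>g. (\<Prod>i<m. q i (g i)) * ln ((\<Prod>i<m. q i (g i)) / P))"
    unfolding P_def Q_def by (rule core[where q=q and m=m and t=t, OF t q0])
  show ?thesis unfolding PE PU DU by (rule c)
qed

lemma fin_unif: "t > 0 \<Longrightarrow> finite (set_pmf (unif_inputs m t))"
proof -
  assume t: "t > 0"
  have "Pi_pmf {..<m} (0::nat) (\<lambda>_. pmf_of_set {..<t}) = pmf_of_set (PiE_dflt {..<m} 0 (\<lambda>_. {..<t}))"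
    by (rule Pi_pmf_of_set) (use t in auto)
  moreover have "finite (PiE_dflt {..<m} (0::nat) (\<lambda>_. {..<t}))" by (intro finite_PiE_dflt) auto
  moreover have "{..<t} \<noteq> {}" using t by auto
  hence "PiE_dflt {..<m} (0::nat) (\<lambda>_. {..<t}) \<noteq> {}" by simp
  ultimately show ?thesis unfolding unif_inputs_def by simp
qed

theorem lemma5p2:
  shows "\<exists>c>0. \<forall>(m::nat) (t::nat) (R::nat) (spk::nat list \<Rightarrow> nat)
                (msg::nat list \<Rightarrow> nat \<Rightarrow> nat pmf) (out::nat list \<Rightarrow> bool).
     0 < t \<longrightarrow> real m \<le> real t / 100 \<longrightarrow>
     (\<forall>\<tau>. spk \<tau> < m) \<longrightarrow>
     prob_out1 (unif_inputs m t) spk msg R out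
       + (1 - prob_out1 (eq_inputs m t) spk msg R out) < 0.1 \<longrightarrow>
     info_cost (unif_inputs m t) spk msg R \<ge> c"
proof (intro exI[of _ "1/2"] conjI allI impI)
  show "(0::real) < 1/2" by simp
next
  fix m t R :: nat and spk :: "nat list \<Rightarrow> nat" and msg :: "nat list \<Rightarrow> nat \<Rightarrow> nat pmf" and out :: "nat list \<Rightarrow> bool"
  assume t: "0 < t" and "real m \<le> real t / 100" and spk: "\<forall>\<tau>. spk \<tau> < m"
    and err: "prob_out1 (unif_inputs m t) spk msg R out + (1 - prob_out1 (eq_inputs m t) spk msg R out) < 0.1"
  have A: "measure_pmf.prob (unif_inputs m t \<bind> (\<lambda>z. transcript spk msg z R \<bind> (\<lambda>\<tau>. return_pmf (z, \<tau>)))) {p. snd p \<in> {\<tau>. out \<tau>}}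
       + (1 - measure_pmf.prob (eq_inputs m t \<bind> (\<lambda>z. transcript spk msg z R \<bind> (\<lambda>\<tau>. return_pmf (z, \<tau>)))) {p. snd p \<in> {\<tau>. out \<tau>}})
     \<ge> 1 - ln 2 * prob_space.mutual_information (measure_pmf (unif_inputs m t \<bind> (\<lambda>z. transcript spk msg z R \<bind> (\<lambda>\<tau>. return_pmf (z, \<tau>)))))
            2 (count_space UNIV) (count_space UNIV) snd fst"
    by (rule partA[where K = "\<lambda>z. transcript spk msg z R", OF fin_unif[OF t] keyB[OF t]]) (use spk in auto)
  define I where "I = info_cost (unif_inputs m t) spk msg R"
  have "1 - ln 2 * I < 0.1"
    using A err unfolding I_def info_cost_def prob_out1_def input_transcript_def by simp
  hence gt: "ln 2 * I > 0.9" by simp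
  have l1: "ln (2::real) \<le> 1" using ln_le_minus_one[of "2::real"] by simp
  have l0: "ln (2::real) > 0" by simp
  show "1/2 \<le> I"
  proof (rule ccontr)
    assume "\<not> 1/2 \<le> I"
    hence "I < 1/2" by simp
    hence "ln 2 * I \<le> ln 2 * (1/2)" using l0 by (intro mult_left_mono) auto
    thus False using gt l1 by linarith
  qed
qed

end
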